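(* Let $d\ge2$ and $\alpha_1,\dots,\alpha_d\in(0,1)$. Let $\mathcal H=\mathbb C^{d+1}$ with orthonormal basis $e_1,\dots,e_{d+1}$ and $\Omega=e_1$. For each $i$, let $P_i$ be the orthogonal projection onto $\mathrm{span}(e_1,e_{i+1})$, let $p_i\le P_i$ be a projection in $\mathcal B(\mathrm{span}(e_1,e_{i+1}))\cong M_2(\mathbb C)$ (extended by $0$ to $\mathcal H$) with $\langle p_ie_1,e_1\rangle=\alpha_i$, and let $p_i^\circ=p_i-\alpha_iP_i$. Then the algebra generated by $p_1^\circ,\dots,p_d^\circ$ (equivalently, the algebra generated by the non-unital embeddings $\mathrm{span}\{P_i,p_i\}\cong\underset{\alpha_i}{\overset{p_i}{\mathbb C}}\oplus\underset{1-\alpha_i}{\overset{P_i-p_i}{\mathbb C}}$, $1\le i\le d$, which are Boolean independent with respect to the vector state $\langle\cdot\,e_1,e_1\rangle$) is all of $M_{d+1}(\mathbb C)$. That is, the Boolean product of the algebras $\underset{\alpha_i}{\overset{p_i}{\mathbb C}}\oplus\underset{1-\alpha_i}{\overset{1-p_i}{\mathbb C}}$, $1\le i\le d$, is isomorphic to $M_{d+1}(\mathbb C)$ with a vector state.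
   Context: The Boolean product of pointed $*$-probability spaces $(\mathcal B_i,\phi_i)$ represented on $\mathcal H_i=\mathbb C\Omega_i\oplus\mathcal H_i^\circ$ is the algebra generated by the non-unital representations of the $\mathcal B_i$ on $\mathcal H=\mathbb C\Omega\oplus\bigoplus_i\mathcal H_i^\circ$, where $\mathcal B_i$ acts on $\mathbb C\Omega\oplus\mathcal H_i^\circ$ as on $\mathcal H_i$ (identifying $\Omega$ with $\Omega_i$) and by $0$ on $\mathcal H_j^\circ$, $j\ne i$, with the vector state of $\Omega$. Here each $\mathcal H_i^\circ$ is one-dimensional. *)

theory Defs
  imports "Jordan_Normal_Form.Schur_Decomposition"
begin

inductive_set gen_alg :: "complex mat set \<Rightarrow> complex mat set" for S where
  gen: "A \<in> S \<Longrightarrow> A \<in> gen_alg S"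
| add: "A \<in> gen_alg S \<Longrightarrow> B \<in> gen_alg S \<Longrightarrow> A + B \<in> gen_alg S"
| smult: "A \<in> gen_alg S \<Longrightarrow> c \<cdot>\<^sub>m A \<in> gen_alg S"
| mult: "A \<in> gen_alg S \<Longrightarrow> B \<in> gen_alg S \<Longrightarrow> A * B \<in> gen_alg S"

text \<open>Orthogonal projection onto span(e_0, e_i) in C^(d+1) (0-based indices: Omega = e_0).\<close>
definition proj2 :: "nat \<Rightarrow> nat \<Rightarrow> complex mat" where
  "proj2 d i = mat (d+1) (d+1) (\<lambda>(j,k). if j = k \<and> (j = 0 \<or> j = i) then 1 else 0)"

end

theory Submission
  imports Defs
begin

lemma adj_entry:
  assumes "A \<in> carrier_mat n n" "a < n" "b < n"
  shows "mat_adjoint A $$ (a,b) = conjugate (A $$ (b,a))"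
  using assms unfolding mat_adjoint_def by (simp add: mat_of_rows_def)

lemma mult_entry:
  assumes "A \<in> carrier_mat n n" "B \<in> carrier_mat n n" "a < n" "b < n"
  shows "(A * B) $$ (a,b) = (\<Sum>k\<in>{0..<n}. A $$ (a,k) * B $$ (k,b))"
  using assms by (simp add: scalar_prod_def)

lemma mult_sparse_row:
  assumes A: "A \<in> carrier_mat n n" and B: "B \<in> carrier_mat n n" and ab: "a < n" "b < n"
    and i: "0 < i" "i < n" and z: "\<And>k. k < n \<Longrightarrow> k \<noteq> 0 \<Longrightarrow> k \<noteq> i \<Longrightarrow> A $$ (a,k) = 0"
  shows "(A * B) $$ (a,b) = A $$ (a,0) * B $$ (0,b) + A $$ (a,i) * B $$ (i,b)"
proof -
  have "(A * B) $$ (a,b) = (\<Sum>k\<in>{0..<n}. A $$ (a,k) * B $$ (k,b))"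
    using A B ab by (rule mult_entry)
  also have "\<dots> = (\<Sum>k\<in>{0,i}. A $$ (a,k) * B $$ (k,b))"
  proof (rule sum.mono_neutral_right)
    show "\<forall>k\<in>{0..<n} - {0, i}. A $$ (a, k) * B $$ (k, b) = 0"
      using z by auto
  qed (use i in auto)
  also have "\<dots> = A $$ (a,0) * B $$ (0,b) + A $$ (a,i) * B $$ (i,b)"
    using i by simp
  finally show ?thesis .
qed

definition munit :: "nat \<Rightarrow> nat \<Rightarrow> nat \<Rightarrow> complex mat" where
  "munit n a b = mat n n (\<lambda>(x,y). if x = a \<and> y = b then 1 else 0)"

lemma munit_carrier[simp]: "munit n a b \<in> carrier_mat n n"
  by (simp add: munit_def)

lemma munit_dims[simp]: "dim_row (munit n a b) = n" "dim_col (munit n a b) = n"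
  by (auto simp: munit_def)

lemma munit_entry[simp]: "x < n \<Longrightarrow> y < n \<Longrightarrow> munit n a b $$ (x,y) = (if x = a \<and> y = b then 1 else 0)"
  by (simp add: munit_def)

lemma proj2_carrier[simp]: "proj2 d i \<in> carrier_mat (d+1) (d+1)"
  by (simp add: proj2_def)

lemma proj2_entry: "x < d+1 \<Longrightarrow> y < d+1 \<Longrightarrow> proj2 d i $$ (x,y) = (if x = y \<and> (x = 0 \<or> x = i) then 1 else 0)"
  by (simp add: proj2_def)

lemma q_entries:
  fixes p :: "complex mat" and \<alpha> :: real
  assumes i: "0 < i" "i \<le> d" and al: "0 < \<alpha>" "\<alpha> < 1"
    and pc: "p \<in> carrier_mat (d+1) (d+1)" and idem: "p * p = p" and sa: "mat_adjoint p = p"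
    and pr: "proj2 d i * p = p" and p00: "p $$ (0,0) = complex_of_real \<alpha>"
  shows "p $$ (0,i) \<noteq> 0"
    and "\<And>a b. a < d+1 \<Longrightarrow> b < d+1 \<Longrightarrow> (p - complex_of_real \<alpha> \<cdot>\<^sub>m proj2 d i) $$ (a,b) =
       (if a = 0 \<and> b = i then p $$ (0,i) else if a = i \<and> b = 0 then cnj (p $$ (0,i))
        else if a = i \<and> b = i then 1 - 2 * complex_of_real \<alpha> else 0)"
proof -
  let ?n = "d+1"
  have zr: "p $$ (a,b) = 0" if "a < ?n" "b < ?n" "a \<noteq> 0" "a \<noteq> i" for a b
  proof -
    have "p $$ (a,b) = (proj2 d i * p) $$ (a,b)" using pr by simp
    also have "\<dots> = (\<Sum>k\<in>{0..<?n}. proj2 d i $$ (a,k) * p $$ (k,b))"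
      using mult_entry[OF proj2_carrier pc that(1,2)] .
    also have "\<dots> = 0" using that by (intro sum.neutral) (simp add: proj2_entry)
    finally show ?thesis .
  qed
  have cj: "p $$ (a,b) = cnj (p $$ (b,a))" if "a < ?n" "b < ?n" for a b
  proof -
    have "p $$ (a,b) = mat_adjoint p $$ (a,b)" using sa by simp
    also have "\<dots> = cnj (p $$ (b,a))" using adj_entry[OF pc that] by simp
    finally show ?thesis .
  qed
  have zc: "p $$ (a,b) = 0" if "a < ?n" "b < ?n" "b \<noteq> 0" "b \<noteq> i" for a b
    using cj[OF that(1,2)] zr[OF that(2,1,3,4)] by simp
  have pe: "p $$ (a,b) = p $$ (a,0) * p $$ (0,b) + p $$ (a,i) * p $$ (i,b)" if "a < ?n" "b < ?n" for a b
  proof -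
    have "p $$ (a,b) = (p * p) $$ (a,b)" using idem by simp
    also have "\<dots> = p $$ (a,0) * p $$ (0,b) + p $$ (a,i) * p $$ (i,b)"
      by (rule mult_sparse_row[OF pc pc that]) (use i zc that in auto)
    finally show ?thesis .
  qed
  define \<beta> where "\<beta> = p $$ (0,i)"
  have in0: "0 < ?n" and ini: "i < ?n" using i by auto
  have pi0: "p $$ (i,0) = cnj \<beta>" unfolding \<beta>_def using cj[OF ini in0] .
  have e00: "complex_of_real \<alpha> = complex_of_real \<alpha> * complex_of_real \<alpha> + \<beta> * cnj \<beta>"
    using pe[OF in0 in0] p00 pi0 unfolding \<beta>_def by simp
  show bnz: "p $$ (0,i) \<noteq> 0"
  proof
    assume "p $$ (0,i) = 0"
    then have "complex_of_real \<alpha> = complex_of_real (\<alpha> * \<alpha>)" using e00 unfolding \<beta>_def by simp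
    then have "\<alpha> = \<alpha> * \<alpha>" using of_real_eq_iff by blast
    then show False using al by (metis mult_cancel_left1 less_irrefl)
  qed
  have e0i: "\<beta> = complex_of_real \<alpha> * \<beta> + \<beta> * p $$ (i,i)"
    using pe[OF in0 ini] p00 unfolding \<beta>_def by simp
  have pii: "p $$ (i,i) = 1 - complex_of_real \<alpha>"
  proof -
    have "\<beta> * (1 - complex_of_real \<alpha> - p $$ (i,i)) = 0" using e0i by (simp add: algebra_simps)
    then show ?thesis using bnz unfolding \<beta>_def by simp
  qed
  fix a b assume ab: "a < d+1" "b < d+1"
  show "(p - complex_of_real \<alpha> \<cdot>\<^sub>m proj2 d i) $$ (a,b) =
       (if a = 0 \<and> b = i then p $$ (0,i) else if a = i \<and> b = 0 then cnj (p $$ (0,i))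
        else if a = i \<and> b = i then 1 - 2 * complex_of_real \<alpha> else 0)"
  proof -
    have me: "(p - complex_of_real \<alpha> \<cdot>\<^sub>m proj2 d i) $$ (a,b) = p $$ (a,b) - complex_of_real \<alpha> * proj2 d i $$ (a,b)"
      using ab pc by (simp add: proj2_def)
    show ?thesis unfolding me
      using ab i pii pi0 p00 zr[OF ab] zc[OF ab] unfolding \<beta>_def
      by (auto simp: proj2_entry)
  qed
qed

lemma munit_mult_left:
  assumes "c < n" "X \<in> carrier_mat n n" "x < n" "y < n"
  shows "(munit n a c * X) $$ (x,y) = (if x = a then X $$ (c,y) else 0)"
proof -
  have "(munit n a c * X) $$ (x,y) = (\<Sum>k\<in>{0..<n}. munit n a c $$ (x,k) * X $$ (k,y))"
    using assms by (intro mult_entry) auto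
  also have "\<dots> = (\<Sum>k\<in>{0..<n}. if k = c then (if x = a then X $$ (c,y) else 0) else 0)"
    by (rule sum.cong) (use assms in auto)
  also have "\<dots> = (if x = a then X $$ (c,y) else 0)" using assms by simp
  finally show ?thesis .
qed

lemma munit_mult_right:
  assumes "c < n" "X \<in> carrier_mat n n" "x < n" "y < n"
  shows "(X * munit n c b) $$ (x,y) = (if y = b then X $$ (x,c) else 0)"
proof -
  have "(X * munit n c b) $$ (x,y) = (\<Sum>k\<in>{0..<n}. X $$ (x,k) * munit n c b $$ (k,y))"
    using assms by (intro mult_entry) auto
  also have "\<dots> = (\<Sum>k\<in>{0..<n}. if k = c then (if y = b then X $$ (x,c) else 0) else 0)"
    by (rule sum.cong) (use assms in auto)
  also have "\<dots> = (if y = b then X $$ (x,c) else 0)" using assms by simp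
  finally show ?thesis .
qed

lemma gen_alg_carrier:
  assumes "S \<subseteq> carrier_mat n n" "A \<in> gen_alg S"
  shows "A \<in> carrier_mat n n"
  using assms(2) by induction (use assms(1) in auto)

lemma munit_mult: "a < n \<Longrightarrow> c < n \<Longrightarrow> b < n \<Longrightarrow> munit n a c * munit n c b = munit n a b"
  by (rule eq_matI) (auto simp: munit_mult_left[where n=n] simp del: index_mult_mat(1))

lemma fill_lemma:
  assumes units: "\<And>a b. a < n \<Longrightarrow> b < n \<Longrightarrow> munit n a b \<in> gen_alg S"
    and A: "A \<in> carrier_mat n n" and n: "0 < n"
  shows "A \<in> gen_alg S"
proof -
  define M where "M m = mat n n (\<lambda>(a,b). if a * n + b < m then A $$ (a,b) else 0)" for m
  have "M m \<in> gen_alg S" for m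
  proof (induction m)
    case 0
    have "M 0 = 0 \<cdot>\<^sub>m munit n 0 0" by (rule eq_matI) (auto simp: M_def munit_def)
    then show ?case using gen_alg.smult[OF units[OF n n]] by simp
  next
    case (Suc m)
    show ?case
    proof (cases "m < n * n")
      case True
      define a where "a = m div n"
      define b where "b = m mod n"
      have ab: "a < n" "b < n" using True n by (auto simp: a_def b_def less_mult_imp_div_less)
      have mab: "m = a * n + b" by (simp add: a_def b_def)
      have eq: "M (Suc m) = M m + A $$ (a,b) \<cdot>\<^sub>m munit n a b"
      proof (rule eq_matI)
        fix x y assume xy: "x < dim_row (M m + A $$ (a, b) \<cdot>\<^sub>m munit n a b)" "y < dim_col (M m + A $$ (a, b) \<cdot>\<^sub>m munit n a b)"
        then have xy': "x < n" "y < n" by (auto simp: M_def)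
        have "x * n + y = a * n + b \<longleftrightarrow> x = a \<and> y = b"
        proof
          assume h: "x * n + y = a * n + b"
          then have "(x * n + y) div n = (a * n + b) div n" by simp
          then have "x = a" using xy' ab by simp
          then show "x = a \<and> y = b" using h by simp
        qed simp
        then show "M (Suc m) $$ (x, y) = (M m + A $$ (a, b) \<cdot>\<^sub>m munit n a b) $$ (x, y)"
          using xy' ab unfolding mab by (auto simp: M_def munit_def)
      qed (auto simp: M_def)
      show ?thesis unfolding eq
        by (intro gen_alg.add Suc gen_alg.smult units ab)
    next
      case False
      have "M (Suc m) = M m"
      proof (rule eq_matI)
        fix x y assume "x < dim_row (M m)" "y < dim_col (M m)"
        then have xy': "x < n" "y < n" by (auto simp: M_def)
        have "x * n + y < n * n"
        proof -
          have "x * n + y < x * n + n" using xy' by simp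
          also have "\<dots> = (x + 1) * n" by simp
          also have "\<dots> \<le> n * n" using xy' by (intro mult_right_mono) auto
          finally show ?thesis .
        qed
        then show "M (Suc m) $$ (x, y) = M m $$ (x, y)" using False xy' by (auto simp: M_def)
      qed (auto simp: M_def)
      then show ?thesis using Suc by simp
    qed
  qed
  moreover have "M (n * n) = A"
  proof (rule eq_matI)
    fix x y assume "x < dim_row A" "y < dim_col A"
    then have xy': "x < n" "y < n" using A by auto
    have "x * n + y < n * n"
    proof -
      have "x * n + y < x * n + n" using xy' by simp
      also have "\<dots> = (x + 1) * n" by simp
      also have "\<dots> \<le> n * n" using xy' by (intro mult_right_mono) auto
      finally show ?thesis .
    qed
    then show "M (n * n) $$ (x, y) = A $$ (x, y)" using xy' by (auto simp: M_def)
  qed (use A in \<open>auto simp: M_def\<close>)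
  ultimately show ?thesis by metis
qed


theorem corollary29:
  fixes d :: nat and \<alpha> :: "nat \<Rightarrow> real" and p :: "nat \<Rightarrow> complex mat"
  assumes "d \<ge> 2"
    and "\<And>i. i \<in> {1..d} \<Longrightarrow> 0 < \<alpha> i \<and> \<alpha> i < 1"
    and "\<And>i. i \<in> {1..d} \<Longrightarrow> p i \<in> carrier_mat (d+1) (d+1)"
    and "\<And>i. i \<in> {1..d} \<Longrightarrow> p i * p i = p i"
    and "\<And>i. i \<in> {1..d} \<Longrightarrow> mat_adjoint (p i) = p i"
    and "\<And>i. i \<in> {1..d} \<Longrightarrow> proj2 d i * p i = p i"
    and "\<And>i. i \<in> {1..d} \<Longrightarrow> p i $$ (0,0) = complex_of_real (\<alpha> i)"
  shows "gen_alg ((\<lambda>i. p i - complex_of_real (\<alpha> i) \<cdot>\<^sub>m proj2 d i) ` {1..d})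
         = carrier_mat (d+1) (d+1)"
proof -
  define n where "n = d + 1"
  define Q where "Q i = p i - complex_of_real (\<alpha> i) \<cdot>\<^sub>m proj2 d i" for i
  define \<beta> where "\<beta> i = p i $$ (0,i)" for i
  define \<gamma> where "\<gamma> i = 1 - 2 * complex_of_real (\<alpha> i)" for i
  define S where "S = Q ` {1..d}"
  have Qc: "Q i \<in> carrier_mat n n" if "i \<in> {1..d}" for i
    using assms(3)[OF that] proj2_carrier[of d i] unfolding Q_def n_def
    by (intro minus_carrier_mat smult_carrier_mat) auto
  have Sc: "S \<subseteq> carrier_mat n n" using Qc unfolding S_def by auto
  have bnz: "\<beta> i \<noteq> 0" if "i \<in> {1..d}" for i
    unfolding \<beta>_def using that assms(2-7)[OF that] by (intro q_entries(1)[where d=d and \<alpha>="\<alpha> i"]) auto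
  have QE: "Q i $$ (a,b) = (if a = 0 \<and> b = i then \<beta> i else if a = i \<and> b = 0 then cnj (\<beta> i)
        else if a = i \<and> b = i then \<gamma> i else 0)" if "i \<in> {1..d}" "a < n" "b < n" for i a b
    unfolding Q_def \<beta>_def \<gamma>_def using that assms(2-7)[OF that(1)] unfolding n_def
    by (intro q_entries(2)[where d=d and \<alpha>="\<alpha> i"]) auto
  have Qmul: "(Q i * X) $$ (a,b) = Q i $$ (a,0) * X $$ (0,b) + Q i $$ (a,i) * X $$ (i,b)"
    if "i \<in> {1..d}" "X \<in> carrier_mat n n" "a < n" "b < n" for i X a b
    by (rule mult_sparse_row[OF Qc[OF that(1)] that(2-4)]) (use that QE in \<open>auto simp: n_def\<close>)
  have QS: "Q i \<in> gen_alg S" if "i \<in> {1..d}" for i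
    using that unfolding S_def by (intro gen_alg.gen) auto
  have n: "0 < n" "1 < n" using assms(1) by (auto simp: n_def)
  have in_n: "i < n" if "i \<in> {1..d}" for i using that by (auto simp: n_def)
  have Eij: "munit n i j \<in> gen_alg S" if "i \<in> {1..d}" "j \<in> {1..d}" "i \<noteq> j" for i j
  proof -
    have "munit n i j = inverse (cnj (\<beta> i) * \<beta> j) \<cdot>\<^sub>m (Q i * Q j)"
    proof (rule eq_matI)
      fix a b assume ab: "a < dim_row (inverse (cnj (\<beta> i) * \<beta> j) \<cdot>\<^sub>m (Q i * Q j))"
        "b < dim_col (inverse (cnj (\<beta> i) * \<beta> j) \<cdot>\<^sub>m (Q i * Q j))"
      then have ab': "a < n" "b < n" using Qc that by auto
      have "(inverse (cnj (\<beta> i) * \<beta> j) \<cdot>\<^sub>m (Q i * Q j)) $$ (a,b) = inverse (cnj (\<beta> i) * \<beta> j) * (Q i * Q j) $$ (a,b)"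
        using ab by simp
      also have "\<dots> = inverse (cnj (\<beta> i) * \<beta> j) * (Q i $$ (a,0) * Q j $$ (0,b) + Q i $$ (a,i) * Q j $$ (i,b))"
        by (subst Qmul[OF that(1) Qc[OF that(2)] ab']) simp
      also have "\<dots> = munit n i j $$ (a,b)"
        using ab' that bnz[OF that(1)] bnz[OF that(2)] in_n[OF that(1)] in_n[OF that(2)]
        by (simp add: QE field_simps)
      finally show "munit n i j $$ (a,b) = (inverse (cnj (\<beta> i) * \<beta> j) \<cdot>\<^sub>m (Q i * Q j)) $$ (a,b)" ..
    qed (use Qc that in auto)
    then show ?thesis using QS that by (metis gen_alg.mult gen_alg.smult)
  qed
  have Eii: "munit n i i \<in> gen_alg S" if "i \<in> {1..d}" for i
  proof -
    define j where "j = (if i = 1 then 2 else 1::nat)"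
    have j: "j \<in> {1..d}" "i \<noteq> j" using that assms(1) by (auto simp: j_def)
    have "munit n i i = munit n i j * munit n j i"
      using munit_mult in_n that j by metis
    then show ?thesis using Eij that j by (metis gen_alg.mult)
  qed
  have E0i: "munit n 0 i \<in> gen_alg S" if "i \<in> {1..d}" for i
  proof -
    have "munit n 0 i = inverse (\<beta> i) \<cdot>\<^sub>m (Q i * munit n i i) + (- \<gamma> i / \<beta> i) \<cdot>\<^sub>m munit n i i"
    proof (rule eq_matI)
      fix a b assume ab: "a < dim_row (inverse (\<beta> i) \<cdot>\<^sub>m (Q i * munit n i i) + (- \<gamma> i / \<beta> i) \<cdot>\<^sub>m munit n i i)"
        "b < dim_col (inverse (\<beta> i) \<cdot>\<^sub>m (Q i * munit n i i) + (- \<gamma> i / \<beta> i) \<cdot>\<^sub>m munit n i i)"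
      then have ab': "a < n" "b < n" using Qc that by auto
      have "(inverse (\<beta> i) \<cdot>\<^sub>m (Q i * munit n i i) + (- \<gamma> i / \<beta> i) \<cdot>\<^sub>m munit n i i) $$ (a,b)
          = inverse (\<beta> i) * (Q i * munit n i i) $$ (a,b) + (- \<gamma> i / \<beta> i) * munit n i i $$ (a,b)"
        using ab' Qc[OF that] by simp
      also have "\<dots> = inverse (\<beta> i) * (if b = i then Q i $$ (a,i) else 0) + (- \<gamma> i / \<beta> i) * munit n i i $$ (a,b)"
        by (subst munit_mult_right[OF in_n[OF that] Qc[OF that] ab']) simp
      also have "\<dots> = munit n 0 i $$ (a,b)"
        using ab' that bnz[OF that] in_n[OF that]
        by (auto simp: QE field_simps)
      finally show "munit n 0 i $$ (a,b) = (inverse (\<beta> i) \<cdot>\<^sub>m (Q i * munit n i i) + (- \<gamma> i / \<beta> i) \<cdot>\<^sub>m munit n i i) $$ (a,b)" ..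
    qed (use Qc that in auto)
    then show ?thesis using QS[OF that] Eii[OF that] by (metis gen_alg.mult gen_alg.smult gen_alg.add)
  qed
  have Ei0: "munit n i 0 \<in> gen_alg S" if "i \<in> {1..d}" for i
  proof -
    have "munit n i 0 = inverse (cnj (\<beta> i)) \<cdot>\<^sub>m (munit n i i * Q i) + (- \<gamma> i / cnj (\<beta> i)) \<cdot>\<^sub>m munit n i i"
    proof (rule eq_matI)
      fix a b assume ab: "a < dim_row (inverse (cnj (\<beta> i)) \<cdot>\<^sub>m (munit n i i * Q i) + (- \<gamma> i / cnj (\<beta> i)) \<cdot>\<^sub>m munit n i i)"
        "b < dim_col (inverse (cnj (\<beta> i)) \<cdot>\<^sub>m (munit n i i * Q i) + (- \<gamma> i / cnj (\<beta> i)) \<cdot>\<^sub>m munit n i i)"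
      then have ab': "a < n" "b < n" using Qc that by auto
      have "(inverse (cnj (\<beta> i)) \<cdot>\<^sub>m (munit n i i * Q i) + (- \<gamma> i / cnj (\<beta> i)) \<cdot>\<^sub>m munit n i i) $$ (a,b)
          = inverse (cnj (\<beta> i)) * (munit n i i * Q i) $$ (a,b) + (- \<gamma> i / cnj (\<beta> i)) * munit n i i $$ (a,b)"
        using ab' Qc[OF that] by simp
      also have "\<dots> = inverse (cnj (\<beta> i)) * (if a = i then Q i $$ (i,b) else 0) + (- \<gamma> i / cnj (\<beta> i)) * munit n i i $$ (a,b)"
        by (subst munit_mult_left[OF in_n[OF that] Qc[OF that] ab']) simp
      also have "\<dots> = munit n i 0 $$ (a,b)"
        using ab' that bnz[OF that] in_n[OF that]
        by (auto simp: QE field_simps)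
      finally show "munit n i 0 $$ (a,b) = (inverse (cnj (\<beta> i)) \<cdot>\<^sub>m (munit n i i * Q i) + (- \<gamma> i / cnj (\<beta> i)) \<cdot>\<^sub>m munit n i i) $$ (a,b)" ..
    qed (use Qc that in auto)
    then show ?thesis using QS[OF that] Eii[OF that] by (metis gen_alg.mult gen_alg.smult gen_alg.add)
  qed
  have one: "(1::nat) \<in> {1..d}" using assms(1) by auto
  have E00: "munit n 0 0 \<in> gen_alg S"
    using munit_mult[of 0 n 1 0] n E0i[OF one] Ei0[OF one] by (metis gen_alg.mult)
  have Ea0: "munit n a 0 \<in> gen_alg S" if "a < n" for a
    using that E00 Ei0 by (cases "a = 0") (auto simp: n_def)
  have E0b: "munit n 0 b \<in> gen_alg S" if "b < n" for b
    using that E00 E0i by (cases "b = 0") (auto simp: n_def)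
  have units: "munit n a b \<in> gen_alg S" if "a < n" "b < n" for a b
    using munit_mult[of a n 0 b] that n Ea0 E0b by (metis gen_alg.mult)
  have "gen_alg S = carrier_mat n n"
  proof
    show "gen_alg S \<subseteq> carrier_mat n n" using gen_alg_carrier[OF Sc] by blast
    show "carrier_mat n n \<subseteq> gen_alg S" using fill_lemma[OF units _ n(1)] by blast
  qed
  then show ?thesis unfolding S_def Q_def n_def .
qed

end
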